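(* Let $G$ be a finite group acting $2$-by-block-transitively on a set $\Omega$, and let $(\omega,\omega')$ be a pair of points in different blocks. Then \[|G(\omega,\omega')| = \frac{|G(\omega)|^2}{|G|-|G([\omega])|};\] in particular the right-hand side is an integer.
   Context: $\Omega$ carries an equivalence relation whose classes are blocks; $[\omega]$ is the block of $\omega$, $G([\omega])$ its setwise stabilizer, $G(\omega)$ the point stabilizer, $G(\omega,\omega')=G(\omega)\cap G(\omega')$. The action is $2$-by-block-transitive if the relation is $G$-invariant, there are at least two blocks, and $G$ is transitive on ordered pairs of points in different blocks. *)

theory Defs
  imports Complex_Main "HOL-Algebra.Group_Action"
begin

definition block :: "('b \<times> 'b) set \<Rightarrow> 'b \<Rightarrow> 'b set" where
  "block R x = R `` {x}"

definition setwise_stabilizer :: "('a, 'c) monoid_scheme \<Rightarrow> ('a \<Rightarrow> 'b \<Rightarrow> 'b) \<Rightarrow> 'b set \<Rightarrow> 'a set" where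
  "setwise_stabilizer G \<phi> B = {g \<in> carrier G. \<phi> g ` B = B}"

definition two_by_block_transitive ::
  "('a, 'c) monoid_scheme \<Rightarrow> 'b set \<Rightarrow> ('a \<Rightarrow> 'b \<Rightarrow> 'b) \<Rightarrow> ('b \<times> 'b) set \<Rightarrow> bool" where
  "two_by_block_transitive G E \<phi> R \<longleftrightarrow>
     group_action G E \<phi> \<and>
     equiv E R \<and>
     (\<forall>g \<in> carrier G. \<forall>x y. (x, y) \<in> R \<longrightarrow> (\<phi> g x, \<phi> g y) \<in> R) \<and>
     2 \<le> card (E // R) \<and>
     (\<forall>x \<in> E. \<forall>y \<in> E. \<forall>x' \<in> E. \<forall>y' \<in> E.
        (x, y) \<notin> R \<longrightarrow> (x', y') \<notin> R \<longrightarrow>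
        (\<exists>g \<in> carrier G. \<phi> g x = x' \<and> \<phi> g y = y'))"

end

theory Submission
  imports Defs
begin

lemma fiber_eq:
  fixes G (structure)
  assumes ga: "group_action G E \<phi>" and Z: "Z \<subseteq> E" and h: "h \<in> carrier G"
  shows "{g\<in>carrier G. \<forall>z\<in>Z. \<phi> g z = \<phi> h z} = (\<lambda>g. h \<otimes>\<^bsub>G\<^esub> g) ` {g\<in>carrier G. \<forall>z\<in>Z. \<phi> g z = z}"
proof -
  interpret group_action G E \<phi> by fact
  interpret group G using group_hom group_hom.axioms(1) by auto
  show ?thesis
  proof
    show "(\<lambda>g. h \<otimes> g) ` {g\<in>carrier G. \<forall>z\<in>Z. \<phi> g z = z} \<subseteq> {g\<in>carrier G. \<forall>z\<in>Z. \<phi> g z = \<phi> h z}"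
      using Z h composition_rule by auto
  next
    show "{g\<in>carrier G. \<forall>z\<in>Z. \<phi> g z = \<phi> h z} \<subseteq> (\<lambda>g. h \<otimes> g) ` {g\<in>carrier G. \<forall>z\<in>Z. \<phi> g z = z}"
    proof
      fix g assume g: "g \<in> {g\<in>carrier G. \<forall>z\<in>Z. \<phi> g z = \<phi> h z}"
      have ig: "inv h \<otimes> g \<in> carrier G" using g h by auto
      have "\<forall>z\<in>Z. \<phi> (inv h \<otimes> g) z = z"
      proof
        fix z assume z: "z \<in> Z"
        have "\<phi> (inv h \<otimes> g) z = \<phi> (inv h) (\<phi> h z)"
          using composition_rule[of z "inv h" g] z Z g h by auto
        also have "\<dots> = z" using orbit_sym_aux[OF h, of z] z Z by auto
        finally show "\<phi> (inv h \<otimes> g) z = z" .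
      qed
      moreover have "g = h \<otimes> (inv h \<otimes> g)"
        using g h by (simp add: m_assoc[symmetric])
      ultimately show "g \<in> (\<lambda>g. h \<otimes> g) ` {g\<in>carrier G. \<forall>z\<in>Z. \<phi> g z = z}"
        using ig by blast
    qed
  qed
qed

lemma fiber_card:
  fixes G (structure)
  assumes ga: "group_action G E \<phi>" and Z: "Z \<subseteq> E" and h: "h \<in> carrier G"
  shows "card {g\<in>carrier G. \<forall>z\<in>Z. \<phi> g z = \<phi> h z} = card {g\<in>carrier G. \<forall>z\<in>Z. \<phi> g z = z}"
proof -
  interpret group_action G E \<phi> by fact
  interpret group G using group_hom group_hom.axioms(1) by auto
  have "inj_on (\<lambda>g. h \<otimes> g) {g\<in>carrier G. \<forall>z\<in>Z. \<phi> g z = z}"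
    using h by (auto simp: inj_on_def)
  then show ?thesis unfolding fiber_eq[OF ga Z h] by (rule card_image)
qed

lemma count_fibers:
  assumes "finite A" "F ` A \<subseteq> C" "finite C" "\<forall>c\<in>C. card {a\<in>A. F a = c} = k"
  shows "card A = card C * k"
proof -
  have "card A = (\<Sum>a\<in>A. 1::nat)" by simp
  also have "\<dots> = (\<Sum>c\<in>C. (\<Sum>a\<in>{a. a\<in>A \<and> F a = c}. 1::nat))"
    using sum.group[OF assms(1) assms(3) assms(2), of "\<lambda>_. 1::nat"] by simp
  also have "\<dots> = (\<Sum>c\<in>C. k)" using assms(4) by simp
  finally show ?thesis by simp
qed

theorem corollary2p2:
  fixes G (structure) and E :: "'b set" and \<phi> :: "'a \<Rightarrow> 'b \<Rightarrow> 'b" and R :: "('b \<times> 'b) set"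
  assumes "group G" and "finite (carrier G)"
    and "two_by_block_transitive G E \<phi> R"
    and "w \<in> E" and "w' \<in> E" and "(w, w') \<notin> R"
  shows "real (card (stabilizer G \<phi> w \<inter> stabilizer G \<phi> w')) =
           real (card (stabilizer G \<phi> w)) ^ 2 /
           (real (order G) - real (card (setwise_stabilizer G \<phi> (block R w)))) \<and>
         (\<exists>n :: int. of_int n = real (card (stabilizer G \<phi> w)) ^ 2 /
           (real (order G) - real (card (setwise_stabilizer G \<phi> (block R w)))))"
proof -
  note tbt = assms(3)[unfolded two_by_block_transitive_def]
  interpret group_action G E \<phi> using tbt by blast
  interpret group G by fact
  have eq: "equiv E R" and inv: "\<And>g x y. g \<in> carrier G \<Longrightarrow> (x, y) \<in> R \<Longrightarrow> (\<phi> g x, \<phi> g y) \<in> R"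
    and two: "2 \<le> card (E // R)"
    and tr: "\<And>x y x' y'. x \<in> E \<Longrightarrow> y \<in> E \<Longrightarrow> x' \<in> E \<Longrightarrow> y' \<in> E \<Longrightarrow> (x, y) \<notin> R \<Longrightarrow> (x', y') \<notin> R \<Longrightarrow>
        \<exists>g \<in> carrier G. \<phi> g x = x' \<and> \<phi> g y = y'"
    using tbt by blast+
  have Rsub: "R \<subseteq> E \<times> E" using eq by (simp add: equiv_def refl_on_def)
  have blk_sub: "\<And>x. block R x \<subseteq> E" using Rsub by (auto simp: block_def)
  have blk_iff: "\<And>x y. x \<in> E \<Longrightarrow> y \<in> block R x \<longleftrightarrow> (x, y) \<in> R"
    by (simp add: block_def)
  have blk_eq: "\<And>x y. (x, y) \<in> R \<Longrightarrow> block R x = block R y"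
    using eq unfolding block_def by (metis equiv_class_eq)
  have other: "\<And>x. x \<in> E \<Longrightarrow> \<exists>y\<in>E. (x, y) \<notin> R"
  proof (rule ccontr)
    fix x assume x: "x \<in> E" and "\<not> (\<exists>y\<in>E. (x, y) \<notin> R)"
    then have "R `` {x} = E" using Rsub by auto
    have "\<And>y. y \<in> E \<Longrightarrow> R `` {y} = E"
      using \<open>R `` {x} = E\<close> eq x by (metis Image_singleton_iff equiv_class_eq)
    then have "E // R = {E}" using x unfolding quotient_def by auto
    then show False using two by simp
  qed
  have onto: "\<And>x. x \<in> E \<Longrightarrow> \<exists>g\<in>carrier G. \<phi> g w = x"
  proof -
    fix x assume x: "x \<in> E"
    then obtain y where "y \<in> E" "(x, y) \<notin> R" using other by blast
    then show "\<exists>g\<in>carrier G. \<phi> g w = x" using tr[of w w' x y] assms x by blast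
  qed
  have finE: "finite E"
  proof (rule finite_subset)
    show "E \<subseteq> (\<lambda>g. \<phi> g w) ` carrier G" using onto by blast
  qed (use assms(2) in auto)
  define S0 where "S0 = stabilizer G \<phi> w"
  define H where "H = stabilizer G \<phi> w \<inter> stabilizer G \<phi> w'"
  define B where "B = block R w"
  define S where "S = setwise_stabilizer G \<phi> B"
  define D where "D = {p \<in> E \<times> E. p \<notin> R}"
  have S0_eq: "S0 = {g\<in>carrier G. \<forall>z\<in>{w}. \<phi> g z = z}" by (auto simp: S0_def stabilizer_def)
  have H_eq: "H = {g\<in>carrier G. \<forall>z\<in>{w,w'}. \<phi> g z = z}" by (auto simp: H_def stabilizer_def)
  have fibw: "\<forall>x\<in>E. card {g\<in>carrier G. \<phi> g w = x} = card S0"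
  proof
    fix x assume "x \<in> E"
    then obtain h where h: "h \<in> carrier G" "\<phi> h w = x" using onto by blast
    have "{g\<in>carrier G. \<phi> g w = x} = {g\<in>carrier G. \<forall>z\<in>{w}. \<phi> g z = \<phi> h z}" using h by auto
    then show "card {g\<in>carrier G. \<phi> g w = x} = card S0"
      unfolding S0_eq using fiber_card[of G E \<phi> "{w}" h] h assms(4) group_action_axioms by simp
  qed
  have cG: "order G = card E * card S0"
    unfolding order_def
    by (rule count_fibers[where F="\<lambda>g. \<phi> g w"]) (use assms(2,4) finE fibw element_image in auto)
  have inv_back: "\<And>g y. g \<in> carrier G \<Longrightarrow> y \<in> E \<Longrightarrow> \<phi> g (\<phi> (inv g) y) = y"
    using orbit_sym_aux by (metis inv_closed inv_inv)
  have img: "\<And>g x. g \<in> carrier G \<Longrightarrow> x \<in> E \<Longrightarrow> \<phi> g ` block R x = block R (\<phi> g x)"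
  proof
    fix g x assume g: "g \<in> carrier G" and x: "x \<in> E"
    show "\<phi> g ` block R x \<subseteq> block R (\<phi> g x)"
      using inv[OF g] by (auto simp: block_def)
    show "block R (\<phi> g x) \<subseteq> \<phi> g ` block R x"
    proof
      fix y assume y: "y \<in> block R (\<phi> g x)"
      then have yE: "y \<in> E" using blk_sub by blast
      have "(\<phi> (inv g) (\<phi> g x), \<phi> (inv g) y) \<in> R"
        using inv[of "inv g"] g y by (auto simp: block_def)
      then have "\<phi> (inv g) y \<in> block R x" using orbit_sym_aux[OF g x] by (auto simp: block_def)
      then show "y \<in> \<phi> g ` block R x" using inv_back[OF g yE] by (metis image_eqI)
    qed
  qed
  have wB: "w \<in> B" using eq assms(4) by (auto simp: B_def block_def equiv_def refl_on_def)
  have key: "\<And>g. g \<in> carrier G \<Longrightarrow> g \<in> S \<longleftrightarrow> \<phi> g w \<in> B"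
  proof
    fix g assume g: "g \<in> carrier G"
    show "g \<in> S \<Longrightarrow> \<phi> g w \<in> B" using wB by (auto simp: S_def setwise_stabilizer_def)
    assume "\<phi> g w \<in> B"
    then have "(w, \<phi> g w) \<in> R" by (simp add: B_def block_def)
    then have "block R (\<phi> g w) = B" using blk_eq B_def by metis
    then show "g \<in> S" using img[OF g assms(4)] g by (simp add: S_def setwise_stabilizer_def B_def)
  qed
  have finB: "finite B" using finE blk_sub B_def finite_subset by metis
  have SG: "S \<subseteq> carrier G" by (auto simp: S_def setwise_stabilizer_def)
  have cS: "card S = card B * card S0"
  proof (rule count_fibers[where F="\<lambda>g. \<phi> g w"])
    show "finite S" using SG assms(2) finite_subset by blast
    show "(\<lambda>g. \<phi> g w) ` S \<subseteq> B" using key SG by auto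
    show "finite B" by fact
    show "\<forall>c\<in>B. card {a \<in> S. \<phi> a w = c} = card S0"
    proof
      fix c assume c: "c \<in> B"
      have "{a \<in> S. \<phi> a w = c} = {g\<in>carrier G. \<phi> g w = c}" using key SG c by auto
      then show "card {a \<in> S. \<phi> a w = c} = card S0" using fibw c blk_sub B_def by auto
    qed
  qed
  have finD: "finite D" using finE by (auto simp: D_def)
  have cD: "order G = card D * card H"
    unfolding order_def
  proof (rule count_fibers[where F="\<lambda>g. (\<phi> g w, \<phi> g w')"])
    show "finite (carrier G)" by fact
    show "finite D" by fact
    show "(\<lambda>g. (\<phi> g w, \<phi> g w')) ` carrier G \<subseteq> D"
    proof clarify
      fix g assume g: "g \<in> carrier G"
      have "(\<phi> g w, \<phi> g w') \<notin> R"
      proof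
        assume "(\<phi> g w, \<phi> g w') \<in> R"
        then have "(\<phi> (inv g) (\<phi> g w), \<phi> (inv g) (\<phi> g w')) \<in> R" using inv g by auto
        then show False using orbit_sym_aux g assms(4,5,6) by metis
      qed
      then show "(\<phi> g w, \<phi> g w') \<in> D" using g assms(4,5) element_image by (auto simp: D_def)
    qed
    show "\<forall>c\<in>D. card {a \<in> carrier G. (\<phi> a w, \<phi> a w') = c} = card H"
    proof
      fix c assume c: "c \<in> D"
      then obtain x y where xy: "c = (x, y)" "x \<in> E" "y \<in> E" "(x, y) \<notin> R" by (auto simp: D_def)
      then obtain h where h: "h \<in> carrier G" "\<phi> h w = x" "\<phi> h w' = y"
        using tr[of w w' x y] assms by blast
      have "{a \<in> carrier G. (\<phi> a w, \<phi> a w') = c} = {g\<in>carrier G. \<forall>z\<in>{w,w'}. \<phi> g z = \<phi> h z}"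
        using h xy by auto
      then show "card {a \<in> carrier G. (\<phi> a w, \<phi> a w') = c} = card H"
        unfolding H_eq using fiber_card[of G E \<phi> "{w,w'}" h] h assms(4,5) group_action_axioms by simp
    qed
  qed
  have cblk: "\<And>x. x \<in> E \<Longrightarrow> card (block R x) = card B"
  proof -
    fix x assume x: "x \<in> E"
    then obtain h where h: "h \<in> carrier G" "\<phi> h w = x" using onto by blast
    have "block R x = \<phi> h ` B" using img[OF h(1) assms(4)] h B_def by simp
    moreover have "inj_on (\<phi> h) B" using inj_prop[OF h(1)] blk_sub B_def inj_on_subset by metis
    ultimately show "card (block R x) = card B" by (simp add: card_image)
  qed
  have cD2: "card D = card E * (card E - card B)"
  proof (rule count_fibers[where F=fst])
    show "finite D" by fact
    show "fst ` D \<subseteq> E" by (auto simp: D_def)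
    show "finite E" by fact
    show "\<forall>c\<in>E. card {a \<in> D. fst a = c} = card E - card B"
    proof
      fix c assume c: "c \<in> E"
      have "{a \<in> D. fst a = c} = {c} \<times> (E - block R c)"
        using c by (auto simp: D_def block_def)
      then have "card {a \<in> D. fst a = c} = card (E - block R c)" by (simp add: card_cartesian_product)
      also have "\<dots> = card E - card B" using cblk[OF c] blk_sub finE
        by (metis card_Diff_subset finite_subset)
      finally show "card {a \<in> D. fst a = c} = card E - card B" .
    qed
  qed
  have bE: "card B \<le> card E" using blk_sub finE B_def card_mono by metis
  have s0: "card S0 > 0"
  proof -
    have "\<one> \<in> S0" using stabilizer_one_closed assms(4) S0_def by simp
    moreover have "finite S0" using assms(2) by (auto simp: S0_def stabilizer_def)
    ultimately show ?thesis by (auto simp: card_gt_0_iff)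
  qed
  have n0: "order G > 0" using assms(2) by (auto simp: order_def card_gt_0_iff)
  define e where "e = real (card E)"
  define b where "b = real (card B)"
  define s where "s = real (card S0)"
  define hh where "hh = real (card H)"
  have r1: "real (order G) = e * s" using cG by (simp add: e_def s_def)
  have r2: "real (card S) = b * s" using cS by (simp add: b_def s_def)
  have r3: "real (order G) = e * (e - b) * hh" using cD cD2 bE by (simp add: e_def b_def hh_def of_nat_diff)
  have sp: "s > 0" using s0 by (simp add: s_def)
  have ep: "e > 0" using n0 r1 sp by (metis mult_eq_0_iff of_nat_0_less_iff linorder_neq_iff e_def of_nat_less_0_iff)
  have hq: "(e - b) * hh = s" using r1 r3 ep
    by (metis (no_types, lifting) mult.assoc mult_cancel_left less_irrefl)
  have den: "real (order G) - real (card S) = s * (e - b)" using r1 r2 by (simp add: algebra_simps)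
  have main: "hh = s ^ 2 / (real (order G) - real (card S))"
  proof -
    have "e - b \<noteq> 0" using hq sp by auto
    moreover have "hh * (s * (e - b)) = s * ((e - b) * hh)" by (simp add: algebra_simps)
    then have "hh * (s * (e - b)) = s ^ 2" using hq by (simp add: power2_eq_square)
    ultimately show ?thesis unfolding den using sp by (simp add: eq_divide_eq)
  qed
  have main': "real (card H) = real (card S0) ^ 2 / (real (order G) - real (card S))"
    using main by (simp add: hh_def s_def)
  have "\<exists>n :: int. of_int n = real (card S0) ^ 2 / (real (order G) - real (card S))"
    using main' by (metis of_int_of_nat_eq)
  with main' show ?thesis by (simp add: H_def S0_def B_def S_def)
qed

end
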